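(* (1) $\ker(d:\mathfrak{tder}_2\to\mathfrak{tder}_3)=k\,r\oplus k\,t$, where $r=(y,0)$ and $t=(y,x)$. (2) $\ker(d:\mathfrak{tder}_3\to\mathfrak{tder}_4)/\mathrm{im}(d:\mathfrak{tder}_2\to\mathfrak{tder}_3)$ is one-dimensional, spanned by the class of $(0,[z,x],0)$.
   Context: $k$ is a field of characteristic zero; $\mathfrak{lie}_n$ is the degree completion of the free Lie algebra over $k$ on $x_1,\dots,x_n$ (written $x,y$ for $n=2$; $x,y,z$ for $n=3$; $x,y,z,w$ for $n=4$). $\mathfrak{tder}_n$ is the Lie algebra of derivations $u$ of $\mathfrak{lie}_n$ such that $u(x_i)=[x_i,a_i]$ for some $a_i\in\mathfrak{lie}_n$, $i=1,\dots,n$; $u$ is written $u=(a_1,\dots,a_n)$, the $a_i$ being normalized so that $a_i$ has zero coefficient of $x_i$ in degree one (this makes the tuple unique). Thus $r=(y,0)$ is the derivation $x\mapsto[x,y]$, $y\mapsto 0$, and $t=(y,x)$ is $x\mapsto[x,y]$, $y\mapsto[y,x]$. For $u=(a,b)\in\mathfrak{tder}_2$ define in $\mathfrak{tder}_3$: $u^{1,2}=(a(x,y),b(x,y),0)$, $u^{2,3}=(0,a(y,z),b(y,z))$, $u^{12,3}=(a(x+y,z),a(x+y,z),b(x+y,z))$, $u^{1,23}=(a(x,y+z),b(x,y+z),b(x,y+z))$, and $du=u^{2,3}-u^{12,3}+u^{1,23}-u^{1,2}$. For $u=(a,b,c)\in\mathfrak{tder}_3$ define in $\mathfrak{tder}_4$: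 $u^{1,2,3}=(a(x,y,z),b(x,y,z),c(x,y,z),0)$, $u^{2,3,4}=(0,a(y,z,w),b(y,z,w),c(y,z,w))$, $u^{12,3,4}=(a,a,b,c)$ each evaluated at $(x+y,z,w)$, $u^{1,23,4}=(a,b,b,c)$ each evaluated at $(x,y+z,w)$, $u^{1,2,34}=(a,b,c,c)$ each evaluated at $(x,y,z+w)$, and $du=u^{2,3,4}-u^{12,3,4}+u^{1,23,4}-u^{1,2,34}+u^{1,2,3}$. *)

theory Defs
  imports Main
begin

text \<open>Noncommutative formal power series over k in variables x_0, x_1, ... :
  a series is its coefficient function on words (lists of variable indices).
  Variables: x = 0, y = 1, z = 2, w = 3.\<close>

type_synonym 'k ser = "nat list \<Rightarrow> 'k"

definition szero :: "'k::field_char_0 ser" where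
  "szero = (\<lambda>w. 0)"

definition gen :: "nat \<Rightarrow> 'k::field_char_0 ser" where
  "gen i = (\<lambda>w. if w = [i] then 1 else 0)"

definition sadd :: "'k::field_char_0 ser \<Rightarrow> 'k ser \<Rightarrow> 'k ser" where
  "sadd f g = (\<lambda>w. f w + g w)"

definition ssmul :: "'k::field_char_0 \<Rightarrow> 'k ser \<Rightarrow> 'k ser" where
  "ssmul c f = (\<lambda>w. c * f w)"

definition smul :: "'k::field_char_0 ser \<Rightarrow> 'k ser \<Rightarrow> 'k ser" where
  "smul f g = (\<lambda>w. \<Sum>j\<le>length w. f (take j w) * g (drop j w))"

definition sbr :: "'k::field_char_0 ser \<Rightarrow> 'k ser \<Rightarrow> 'k ser" where
  "sbr f g = (\<lambda>w. smul f g w - smul g f w)"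

definition hpart :: "nat \<Rightarrow> 'k::field_char_0 ser \<Rightarrow> 'k ser" where
  "hpart d f = (\<lambda>w. if length w = d then f w else 0)"

text \<open>The free Lie algebra on x_0..x_{n-1}, realized (as usual) as the Lie
  subalgebra of the free associative algebra generated by the variables.\<close>
inductive_set lie_poly :: "nat \<Rightarrow> 'k::field_char_0 ser set" for n :: nat where
  zero: "szero \<in> lie_poly n"
| gen: "i < n \<Longrightarrow> gen i \<in> lie_poly n"
| add: "f \<in> lie_poly n \<Longrightarrow> g \<in> lie_poly n \<Longrightarrow> sadd f g \<in> lie_poly n"
| smult: "f \<in> lie_poly n \<Longrightarrow> ssmul c f \<in> lie_poly n"
| br: "f \<in> lie_poly n \<Longrightarrow> g \<in> lie_poly n \<Longrightarrow> sbr f g \<in> lie_poly n"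

definition lie :: "nat \<Rightarrow> 'k::field_char_0 ser set" where
  "lie n = {f. \<forall>d. hpart d f \<in> lie_poly n}"

text \<open>tder_n, identified with normalized tuples (a_0,...,a_{n-1}) (components
  with index >= n are zero): a_i in lie_n with zero coefficient of x_i.\<close>
definition tder :: "nat \<Rightarrow> (nat \<Rightarrow> 'k::field_char_0 ser) set" where
  "tder n = {u. (\<forall>i<n. u i \<in> lie n \<and> u i [i] = 0) \<and> (\<forall>i\<ge>n. u i = szero)}"

definition tzero :: "nat \<Rightarrow> 'k::field_char_0 ser" where
  "tzero = (\<lambda>i. szero)"

definition tadd :: "(nat \<Rightarrow> 'k::field_char_0 ser) \<Rightarrow> (nat \<Rightarrow> 'k ser) \<Rightarrow> nat \<Rightarrow> 'k ser" where
  "tadd u v = (\<lambda>i. sadd (u i) (v i))"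

definition tsmul :: "'k::field_char_0 \<Rightarrow> (nat \<Rightarrow> 'k ser) \<Rightarrow> nat \<Rightarrow> 'k ser" where
  "tsmul c u = (\<lambda>i. ssmul c (u i))"

text \<open>Linear substitution: old variable x_j (j < m) is replaced by the sum of
  the new variables x_i, i \<in> phi j.\<close>
definition ren :: "nat \<Rightarrow> (nat \<Rightarrow> nat set) \<Rightarrow> 'k::field_char_0 ser \<Rightarrow> 'k ser" where
  "ren m phi f = (\<lambda>v. \<Sum>w\<in>{w. set w \<subseteq> {..<m} \<and> length w = length v}.
      f w * (\<Prod>t<length v. if v ! t \<in> phi (w ! t) then 1 else 0))"

definition cop :: "nat \<Rightarrow> (nat \<Rightarrow> nat set) \<Rightarrow> (nat \<Rightarrow> nat option)
    \<Rightarrow> (nat \<Rightarrow> 'k::field_char_0 ser) \<Rightarrow> nat \<Rightarrow> 'k ser" where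
  "cop m phi psi u = (\<lambda>i. case psi i of None \<Rightarrow> szero | Some j \<Rightarrow> ren m phi (u j))"

text \<open>d : tder_2 \<rightarrow> tder_3,  du = u^{2,3} - u^{12,3} + u^{1,23} - u^{1,2}.\<close>
definition d2 :: "(nat \<Rightarrow> 'k::field_char_0 ser) \<Rightarrow> nat \<Rightarrow> 'k ser" where
  "d2 u = (\<lambda>i w.
     cop 2 (\<lambda>j. {Suc j}) (\<lambda>i. if i = 1 then Some 0 else if i = 2 then Some 1 else None) u i w
   - cop 2 (\<lambda>j. if j = 0 then {0,1} else {2}) (\<lambda>i. if i = 0 \<or> i = 1 then Some 0 else if i = 2 then Some 1 else None) u i w
   + cop 2 (\<lambda>j. if j = 0 then {0} else {1,2}) (\<lambda>i. if i = 0 then Some 0 else if i = 1 \<or> i = 2 then Some 1 else None) u i w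
   - cop 2 (\<lambda>j. {j}) (\<lambda>i. if i = 0 then Some 0 else if i = 1 then Some 1 else None) u i w)"

text \<open>d : tder_3 \<rightarrow> tder_4,
  du = u^{2,3,4} - u^{12,3,4} + u^{1,23,4} - u^{1,2,34} + u^{1,2,3}.\<close>
definition d3 :: "(nat \<Rightarrow> 'k::field_char_0 ser) \<Rightarrow> nat \<Rightarrow> 'k ser" where
  "d3 u = (\<lambda>i w.
     cop 3 (\<lambda>j. {Suc j}) (\<lambda>i. if i = 1 then Some 0 else if i = 2 then Some 1 else if i = 3 then Some 2 else None) u i w
   - cop 3 (\<lambda>j. if j = 0 then {0,1} else if j = 1 then {2} else {3})
       (\<lambda>i. if i = 0 \<or> i = 1 then Some 0 else if i = 2 then Some 1 else if i = 3 then Some 2 else None) u i w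
   + cop 3 (\<lambda>j. if j = 0 then {0} else if j = 1 then {1,2} else {3})
       (\<lambda>i. if i = 0 then Some 0 else if i = 1 \<or> i = 2 then Some 1 else if i = 3 then Some 2 else None) u i w
   - cop 3 (\<lambda>j. if j = 0 then {0} else if j = 1 then {1} else {2,3})
       (\<lambda>i. if i = 0 then Some 0 else if i = 1 then Some 1 else if i = 2 \<or> i = 3 then Some 2 else None) u i w
   + cop 3 (\<lambda>j. {j}) (\<lambda>i. if i = 0 then Some 0 else if i = 1 then Some 1 else if i = 2 then Some 2 else None) u i w)"

definition r_der :: "nat \<Rightarrow> 'k::field_char_0 ser" where
  "r_der = (\<lambda>i. if i = 0 then gen 1 else szero)"

definition t_der :: "nat \<Rightarrow> 'k::field_char_0 ser" where
  "t_der = (\<lambda>i. if i = 0 then gen 1 else if i = 1 then gen 0 else szero)"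

definition c_der :: "nat \<Rightarrow> 'k::field_char_0 ser" where
  "c_der = (\<lambda>i. if i = 1 then sbr (gen 2) (gen 0) else szero)"

end

theory Submission
  imports Defs
begin


lemma lie_poly_supp: "f \<in> lie_poly n \<Longrightarrow> (\<not> set w \<subseteq> {..<n} \<or> w = []) \<Longrightarrow> f w = 0"
proof (induction arbitrary: w rule: lie_poly.induct)
  case zero then show ?case by (simp add: szero_def)
next
  case (gen i) then show ?case by (auto simp: gen_def)
next
  case (add f g) then show ?case by (simp add: sadd_def)
next
  case (smult f c) then show ?case by (simp add: ssmul_def)
next
  case (br f g)
  have "smul f g w = 0" if "f \<in> lie_poly n" "g \<in> lie_poly n"
      "\<And>w. (\<not> set w \<subseteq> {..<n} \<or> w = []) \<Longrightarrow> f w = 0"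
      "\<And>w. (\<not> set w \<subseteq> {..<n} \<or> w = []) \<Longrightarrow> g w = 0" for f g
  proof -
    have z: "f (take j w) * g (drop j w) = 0" for j
    proof (cases "w = []")
      case True then show ?thesis using that(3)[of "[]"] by simp
    next
      case False
      then have "\<not> set (take j w) \<subseteq> {..<n} \<or> \<not> set (drop j w) \<subseteq> {..<n}"
        using br.prems by (metis append_take_drop_id set_append Un_subset_iff)
      then show ?thesis using that(3,4) by auto
    qed
    show ?thesis unfolding smul_def using z by (simp add: sum.neutral)
  qed
  then have "smul f g w = 0" "smul g f w = 0" using br by blast+
  then show ?case by (simp add: sbr_def)
qed

lemma lie_supp: "f \<in> lie n \<Longrightarrow> (\<not> set w \<subseteq> {..<n} \<or> w = []) \<Longrightarrow> f w = 0"
proof -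
  assume f: "f \<in> lie n" and w: "(\<not> set w \<subseteq> {..<n} \<or> w = [])"
  have "hpart (length w) f \<in> lie_poly n" using f by (simp add: lie_def)
  from lie_poly_supp[OF this w] show ?thesis by (simp add: hpart_def)
qed

definition lists_of :: "nat set \<Rightarrow> nat \<Rightarrow> nat list set" where
  "lists_of S d = {w. set w \<subseteq> S \<and> length w = d}"

definition lsum :: "nat set \<Rightarrow> nat \<Rightarrow> 'k::field_char_0 ser \<Rightarrow> 'k" where
  "lsum S d f = (\<Sum>w\<in>lists_of S d. f w)"

lemma lsum_smul:
  assumes S: "finite S"
  shows "lsum S d (smul f g) = (\<Sum>j\<le>d. lsum S j f * lsum S (d - j) g)"
proof -
  have "lsum S d (smul f g) = (\<Sum>w\<in>lists_of S d. \<Sum>j\<le>d. f (take j w) * g (drop j w))"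
    unfolding lsum_def smul_def by (rule sum.cong) (auto simp: lists_of_def)
  also have "\<dots> = (\<Sum>j\<le>d. \<Sum>w\<in>lists_of S d. f (take j w) * g (drop j w))"
    by (rule sum.swap)
  also have "\<dots> = (\<Sum>j\<le>d. lsum S j f * lsum S (d - j) g)"
  proof (rule sum.cong[OF refl])
    fix j assume j: "j \<in> {..d}"
    have bij: "bij_betw (\<lambda>w. (take j w, drop j w)) (lists_of S d) (lists_of S j \<times> lists_of S (d - j))"
    proof (rule bij_betw_byWitness[where f' = "\<lambda>(a, b). a @ b"])
      show "\<forall>a\<in>lists_of S d. (\<lambda>(a, b). a @ b) (take j a, drop j a) = a" by simp
      show "\<forall>a'\<in>lists_of S j \<times> lists_of S (d - j). (take j (case a' of (a, b) \<Rightarrow> a @ b), drop j (case a' of (a, b) \<Rightarrow> a @ b)) = a'"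
        by (auto simp: lists_of_def)
      show "(\<lambda>w. (take j w, drop j w)) ` lists_of S d \<subseteq> lists_of S j \<times> lists_of S (d - j)"
        using j by (auto simp: lists_of_def dest: in_set_takeD in_set_dropD)
      show "(\<lambda>(a, b). a @ b) ` (lists_of S j \<times> lists_of S (d - j)) \<subseteq> lists_of S d"
        using j by (auto simp: lists_of_def)
    qed
    have "(\<Sum>w\<in>lists_of S d. f (take j w) * g (drop j w))
        = (\<Sum>p\<in>lists_of S j \<times> lists_of S (d - j). f (fst p) * g (snd p))"
      using sum.reindex_bij_betw[OF bij, of "\<lambda>p. f (fst p) * g (snd p)"] by simp
    also have "\<dots> = lsum S j f * lsum S (d - j) g"
      unfolding lsum_def sum_product sum.cartesian_product by (simp add: case_prod_beta)
    finally show "(\<Sum>w\<in>lists_of S d. f (take j w) * g (drop j w)) = lsum S j f * lsum S (d - j) g" .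
  qed
  finally show ?thesis .
qed

lemma lsum_sbr: assumes "finite S" shows "lsum S d (sbr f g) = 0"
proof -
  have lin: "lsum S d (sbr f g) = lsum S d (smul f g) - lsum S d (smul g f)"
    by (simp add: lsum_def sbr_def sum_subtractf)
  have "(\<Sum>j\<le>d. lsum S j g * lsum S (d - j) f) = (\<Sum>j\<le>d. lsum S (d - j) g * lsum S j f)"
  proof -
    have "(\<Sum>j\<le>d. lsum S (d - j) g * lsum S j f) = (\<Sum>i<Suc d. (\<lambda>j. lsum S j g * lsum S (d - j) f) (Suc d - Suc i))"
      by (rule sum.cong) (auto simp: atMost_atLeast0 atLeast0LessThan[symmetric] intro!: arg_cong2[where f="(*)"])
    also have "\<dots> = (\<Sum>j<Suc d. lsum S j g * lsum S (d - j) f)" by (rule sum.nat_diff_reindex)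
    finally show ?thesis by (simp add: lessThan_Suc_atMost)
  qed
  then show ?thesis using lin by (simp add: lsum_smul[OF assms] mult.commute)
qed

lemma lie_poly_lsum: "f \<in> lie_poly n \<Longrightarrow> finite S \<Longrightarrow> d \<noteq> 1 \<Longrightarrow> lsum S d f = 0"
proof (induction rule: lie_poly.induct)
  case zero then show ?case by (simp add: lsum_def szero_def)
next
  case (gen i)
  have "\<forall>w\<in>lists_of S d. gen i w = 0" using gen by (auto simp: gen_def lists_of_def)
  then show ?case unfolding lsum_def by (rule sum.neutral)
next
  case (add f g) then show ?case by (simp add: lsum_def sadd_def sum.distrib)
next
  case (smult f c) then show ?case by (simp add: lsum_def ssmul_def sum_distrib_left[symmetric])
next
  case (br f g) then show ?case by (simp add: lsum_sbr)
qed

lemma lie_lsum: "f \<in> lie n \<Longrightarrow> finite S \<Longrightarrow> d \<noteq> 1 \<Longrightarrow> lsum S d f = 0"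
proof -
  assume f: "f \<in> lie n" "finite S" "d \<noteq> 1"
  have "hpart d f \<in> lie_poly n" using f by (simp add: lie_def)
  from lie_poly_lsum[OF this f(2,3)] show ?thesis
    by (simp add: lsum_def hpart_def lists_of_def)
qed




definition mp :: "nat list \<Rightarrow> nat \<Rightarrow> nat" where
  "mp L i = (if i < length L then L ! i else 9)"

lemma mp_comp[simp]: "length L1 \<le> 9 \<Longrightarrow> mp L1 \<circ> mp L2 = mp (map (mp L1) L2)"
  by (auto simp: mp_def fun_eq_iff)

definition rnm :: "nat list \<Rightarrow> 'k::field_char_0 ser \<Rightarrow> 'k ser" where
  "rnm L f = (\<lambda>v. f (map (mp L) v))"

definition gens :: "nat set \<Rightarrow> 'k::field_char_0 ser" where
  "gens A = (\<lambda>v. if \<exists>i\<in>A. v = [i] then 1 else 0)"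

lemma gens_lie_poly: "finite A \<Longrightarrow> A \<subseteq> {..<m} \<Longrightarrow> gens A \<in> lie_poly m"
proof (induction A rule: finite_induct)
  case empty
  have "gens {} = szero" by (simp add: gens_def szero_def)
  then show ?case using lie_poly.zero by metis
next
  case (insert i A)
  have "gens (insert i A) = sadd (gen i) (gens A)"
    using insert by (auto simp: gens_def sadd_def gen_def fun_eq_iff)
  then show ?case using insert lie_poly.add lie_poly.gen by (metis insert_subset lessThan_iff)
qed

lemma rnm_smul: "rnm L (smul f g) = smul (rnm L f) (rnm L g)"
  by (simp add: rnm_def smul_def fun_eq_iff take_map drop_map)

lemma lie_poly_rnm:
  assumes "f \<in> lie_poly n" "n \<le> 9" "length L \<le> 9" "\<forall>i<length L. L!i < n \<or> L!i = 9"
    "\<forall>i<length L. m \<le> i \<longrightarrow> L!i = 9"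
  shows "rnm L f \<in> lie_poly m"
  using assms
proof (induction rule: lie_poly.induct)
  case zero
  have "rnm L szero = szero" by (simp add: rnm_def szero_def)
  then show ?case using lie_poly.zero by metis
next
  case (gen j)
  have "rnm L (gen j) = gens {i. i < length L \<and> L!i = j}"
  proof
    fix v
    have "(map (mp L) v = [j]) = (\<exists>i\<in>{i. i < length L \<and> L!i = j}. v = [i])"
      using gen by (cases v) (auto simp: mp_def)
    then show "rnm L (gen j) v = gens {i. i < length L \<and> L!i = j} v"
      by (simp add: rnm_def gen_def gens_def)
  qed
  moreover have "{i. i < length L \<and> L!i = j} \<subseteq> {..<m}"
    using gen by (auto simp: not_less[symmetric])
  moreover have "finite {i. i < length L \<and> L!i = j}" by simp
  ultimately show ?case using gens_lie_poly[of "{i. i < length L \<and> L!i = j}" m] by metis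
next
  case (add f g)
  have "rnm L (sadd f g) = sadd (rnm L f) (rnm L g)" by (simp add: rnm_def sadd_def)
  then show ?case using add lie_poly.add by metis
next
  case (smult f c)
  have "rnm L (ssmul c f) = ssmul c (rnm L f)" by (simp add: rnm_def ssmul_def)
  then show ?case using smult lie_poly.smult by metis
next
  case (br f g)
  have "rnm L (sbr f g) = sbr (rnm L f) (rnm L g)"
    by (simp add: sbr_def fun_eq_iff rnm_smul[symmetric]) (simp add: rnm_def)
  then show ?case using br lie_poly.br by metis
qed

lemma lie_rnm:
  assumes "f \<in> lie n" "n \<le> 9" "length L \<le> 9" "\<forall>i<length L. L!i < n \<or> L!i = 9"
    "\<forall>i<length L. m \<le> i \<longrightarrow> L!i = 9"
  shows "rnm L f \<in> lie m"
  unfolding lie_def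
proof (intro CollectI allI)
  fix d
  have "hpart d (rnm L f) = rnm L (hpart d f)" by (simp add: hpart_def rnm_def fun_eq_iff)
  moreover have "hpart d f \<in> lie_poly n" using assms(1) by (simp add: lie_def)
  ultimately show "hpart d (rnm L f) \<in> lie_poly m" using lie_poly_rnm assms(2-5) by metis
qed

lemma lie_lin: "f \<in> lie n \<Longrightarrow> g \<in> lie n \<Longrightarrow> (\<lambda>w. \<alpha> * f w + \<beta> * g w) \<in> lie n"
proof -
  assume f: "f \<in> lie n" and g: "g \<in> lie n"
  show ?thesis unfolding lie_def
  proof (intro CollectI allI)
    fix d
    have "hpart d (\<lambda>w. \<alpha> * f w + \<beta> * g w) = sadd (ssmul \<alpha> (hpart d f)) (ssmul \<beta> (hpart d g))"
      by (simp add: hpart_def sadd_def ssmul_def fun_eq_iff)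
    then show "hpart d (\<lambda>w. \<alpha> * f w + \<beta> * g w) \<in> lie_poly n"
      using f g by (simp add: lie_def lie_poly.add lie_poly.smult)
  qed
qed

lemma prod_ind: "(\<Prod>t<(n::nat). if Q t then (1::'a::comm_semiring_1) else 0) = (if \<forall>t<n. Q t then 1 else 0)"
  by (induction n) (auto simp: less_Suc_eq)

lemma ren_mp:
  assumes A: "\<forall>j<m. \<forall>i. i \<in> phi j \<longleftrightarrow> (i < length L \<and> L!i = j)"
    and B: "\<forall>i<length L. L!i < m \<or> L!i = 9" and C: "m \<le> 9" and L: "length L \<le> 9"
    and D: "\<forall>v. 9 \<in> set v \<longrightarrow> f v = 0"
  shows "ren m phi f v = f (map (mp L) v)"
proof -
  let ?I = "{w. set w \<subseteq> {..<m} \<and> length w = length v}"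
  let ?w0 = "map (mp L) v"
  have key: "(\<forall>t<length v. v!t \<in> phi (w!t)) \<longleftrightarrow> w = ?w0" if w: "w \<in> ?I" for w
  proof -
    have "v!t \<in> phi (w!t) \<longleftrightarrow> mp L (v!t) = w!t" if t: "t < length v" for t
    proof -
      have "w!t \<in> set w" using w t by simp
      then have "w!t < m" using w by blast
      then show ?thesis using A C by (auto simp: mp_def)
    qed
    then show ?thesis using w by (auto simp: list_eq_iff_nth_eq)
  qed
  have "ren m phi f v = (\<Sum>w\<in>?I. if w = ?w0 then f w else 0)"
    unfolding ren_def
    by (rule sum.cong[OF refl]) (simp add: prod_ind key del: Set.mem_Collect_eq)
  also have "\<dots> = (if ?w0 \<in> ?I then f ?w0 else 0)"
    by (rule sum.delta) (rule finite_lists_length_eq, simp)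
  also have "\<dots> = f ?w0"
  proof (cases "?w0 \<in> ?I")
    case False
    then obtain x where x: "x \<in> set ?w0" "\<not> x < m" by (auto simp del: set_map)
    then have "x = 9" using B L by (auto simp: mp_def)
    then show ?thesis using D x by auto
  qed simp
  finally show ?thesis .
qed




definition nine :: "(nat \<Rightarrow> 'k::field_char_0 ser) \<Rightarrow> bool" where
  "nine u = (\<forall>j v. 9 \<in> set v \<longrightarrow> u j v = 0)"

lemma lt4: "(i::nat) < 4 \<longleftrightarrow> i = 0 \<or> i = 1 \<or> i = 2 \<or> i = 3" by auto

lemmas renI = ren_mp[rule_format]

lemma r2a: "\<forall>v. 9 \<in> set v \<longrightarrow> f v = 0 \<Longrightarrow> ren 2 (\<lambda>j. {Suc j}) f v = f (map (mp [9,0,1,9]) v)"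
  by (rule renI) (auto simp: less_Suc_eq nth_Cons' split: if_splits)
lemma r2b: "\<forall>v. 9 \<in> set v \<longrightarrow> f v = 0 \<Longrightarrow> ren 2 (\<lambda>j. if j = 0 then {0,1} else {2}) f v = f (map (mp [0,0,1,9]) v)"
  by (rule renI) (auto simp: less_Suc_eq nth_Cons' split: if_splits)
lemma r2c: "\<forall>v. 9 \<in> set v \<longrightarrow> f v = 0 \<Longrightarrow> ren 2 (\<lambda>j. if j = 0 then {0} else {1,2}) f v = f (map (mp [0,1,1,9]) v)"
  by (rule renI) (auto simp: less_Suc_eq nth_Cons' split: if_splits)
lemma r2d: "\<forall>v. 9 \<in> set v \<longrightarrow> f v = 0 \<Longrightarrow> ren 2 (\<lambda>j. {j}) f v = f (map (mp [0,1,9,9]) v)"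
  by (rule renI) (auto simp: less_Suc_eq nth_Cons' split: if_splits)
lemma r3a: "\<forall>v. 9 \<in> set v \<longrightarrow> f v = 0 \<Longrightarrow> ren 3 (\<lambda>j. {Suc j}) f v = f (map (mp [9,0,1,2]) v)"
  by (rule renI) (auto simp: less_Suc_eq nth_Cons' split: if_splits)
lemma r3b: "\<forall>v. 9 \<in> set v \<longrightarrow> f v = 0 \<Longrightarrow> ren 3 (\<lambda>j. if j = 0 then {0,1} else if j = 1 then {2} else {3}) f v = f (map (mp [0,0,1,2]) v)"
  by (rule renI) (auto simp: less_Suc_eq nth_Cons' split: if_splits)
lemma r3c: "\<forall>v. 9 \<in> set v \<longrightarrow> f v = 0 \<Longrightarrow> ren 3 (\<lambda>j. if j = 0 then {0} else if j = 1 then {1,2} else {3}) f v = f (map (mp [0,1,1,2]) v)"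
  by (rule renI) (auto simp: less_Suc_eq nth_Cons' split: if_splits)
lemma r3d: "\<forall>v. 9 \<in> set v \<longrightarrow> f v = 0 \<Longrightarrow> ren 3 (\<lambda>j. if j = 0 then {0} else if j = 1 then {1} else {2,3}) f v = f (map (mp [0,1,2,2]) v)"
  by (rule renI) (auto simp: less_Suc_eq nth_Cons' split: if_splits)
lemma r3e: "\<forall>v. 9 \<in> set v \<longrightarrow> f v = 0 \<Longrightarrow> ren 3 (\<lambda>j. {j}) f v = f (map (mp [0,1,2,9]) v)"
  by (rule renI) (auto simp: less_Suc_eq nth_Cons' split: if_splits)

lemma d2_formula:
  assumes "nine u"
  shows "d2 u i w = (if i = 0 then - u 0 (map (mp [0,0,1,9]) w) + u 0 (map (mp [0,1,1,9]) w) - u 0 (map (mp [0,1,9,9]) w)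
    else if i = 1 then u 0 (map (mp [9,0,1,9]) w) - u 0 (map (mp [0,0,1,9]) w) + u 1 (map (mp [0,1,1,9]) w) - u 1 (map (mp [0,1,9,9]) w)
    else if i = 2 then u 1 (map (mp [9,0,1,9]) w) - u 1 (map (mp [0,0,1,9]) w) + u 1 (map (mp [0,1,1,9]) w)
    else 0)"
proof -
  have D: "\<forall>v. 9 \<in> set v \<longrightarrow> u j v = 0" for j using assms by (simp add: nine_def)
  show ?thesis unfolding d2_def cop_def
    by (simp add: r2a[OF D] r2b[OF D] r2c[OF D] r2d[OF D] szero_def)
qed

lemma d3_formula:
  assumes "nine u"
  shows "d3 u i w = (if i = 0 then - u 0 (map (mp [0,0,1,2]) w) + u 0 (map (mp [0,1,1,2]) w) - u 0 (map (mp [0,1,2,2]) w) + u 0 (map (mp [0,1,2,9]) w)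
    else if i = 1 then u 0 (map (mp [9,0,1,2]) w) - u 0 (map (mp [0,0,1,2]) w) + u 1 (map (mp [0,1,1,2]) w) - u 1 (map (mp [0,1,2,2]) w) + u 1 (map (mp [0,1,2,9]) w)
    else if i = 2 then u 1 (map (mp [9,0,1,2]) w) - u 1 (map (mp [0,0,1,2]) w) + u 1 (map (mp [0,1,1,2]) w) - u 2 (map (mp [0,1,2,2]) w) + u 2 (map (mp [0,1,2,9]) w)
    else if i = 3 then u 2 (map (mp [9,0,1,2]) w) - u 2 (map (mp [0,0,1,2]) w) + u 2 (map (mp [0,1,1,2]) w) - u 2 (map (mp [0,1,2,2]) w)
    else 0)"
proof -
  have D: "\<forall>v. 9 \<in> set v \<longrightarrow> u j v = 0" for j using assms by (simp add: nine_def)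
  show ?thesis unfolding d3_def cop_def
    by (simp add: r3a[OF D] r3b[OF D] r3c[OF D] r3d[OF D] r3e[OF D] szero_def)
qed




lemma tder_lie: "u \<in> tder n \<Longrightarrow> i < n \<Longrightarrow> u i \<in> lie n"
  by (simp add: tder_def)

lemma tder_nine: assumes "u \<in> tder n" "n \<le> 9" shows "nine u"
  unfolding nine_def
proof (intro allI impI)
  fix j v assume v: "(9::nat) \<in> set v"
  show "u j v = 0"
  proof (cases "j < n")
    case True
    have "\<not> set v \<subseteq> {..<n}" using v assms(2) by auto
    then show ?thesis using lie_supp[OF tder_lie[OF assms(1) True], of v] by blast
  next
    case False then show ?thesis using assms(1) by (simp add: tder_def szero_def)
  qed
qed

lemma mp9[simp]: "length L \<le> 9 \<Longrightarrow> mp L 9 = 9" by (simp add: mp_def)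

lemma nine_map: "(9::nat) \<in> set v \<Longrightarrow> length L \<le> 9 \<Longrightarrow> 9 \<in> set (map (mp L) v)"
  by (metis image_eqI list.set_map mp9)

lemma d2_nine: assumes "nine u" shows "nine (d2 u)"
  unfolding nine_def
proof (intro allI impI)
  fix j v assume v: "(9::nat) \<in> set v"
  have z: "u k (map (mp L) v) = 0" if "length L \<le> 9" for k L
    using assms nine_map[OF v that] by (simp add: nine_def)
  show "d2 u j v = 0" by (simp add: d2_formula[OF assms] z)
qed

lemma d3d2: assumes "u \<in> tder 2" shows "d3 (d2 u) = tzero"
proof -
  have n: "nine u" using tder_nine[OF assms] by simp
  have n2: "nine (d2 u)" using d2_nine[OF n] .
  show ?thesis
    by (auto simp: fun_eq_iff tzero_def szero_def d3_formula[OF n2] d2_formula[OF n] mp_def[of _ 0] mp_def[of _ 1] mp_def[of _ 2] mp_def[of _ 3] mp_def[of _ "Suc 0"])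
qed




lemmas mpv = mp_def[of _ 0] mp_def[of _ 1] mp_def[of _ 2] mp_def[of _ 3] mp_def[of _ "Suc 0"]

lemma idmap:
  assumes "f \<in> lie n" "n \<le> length L" "length L \<le> 9"
    "\<forall>i<length L. (i < n \<longrightarrow> L!i = i) \<and> (\<not> i < n \<longrightarrow> L!i = 9)"
  shows "f (map (mp L) v) = f v"
proof (cases "set v \<subseteq> {..<n}")
  case True
  have "map (mp L) v = v"
    by (rule map_idI) (use True assms(2,4) in \<open>auto simp: mp_def\<close>)
  then show ?thesis by simp
next
  case False
  then obtain x where x: "x \<in> set v" "\<not> x < n" by auto
  have "mp L x = 9" using x assms(4) by (auto simp: mp_def)
  then have "9 \<in> set (map (mp L) v)" using x by force
  then have "\<not> set (map (mp L) v) \<subseteq> {..<n}" using assms(2,3) by auto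
  then show ?thesis using lie_supp[OF assms(1)] False by metis
qed

lemma coll0: assumes "f \<in> lie n" "n \<le> 9" "set w \<subseteq> {l, 9}" "length w \<noteq> 1" shows "f w = 0"
proof (cases "9 \<in> set w")
  case True
  then have "\<not> set w \<subseteq> {..<n}" using assms(2) by auto
  then show ?thesis using lie_supp[OF assms(1)] by blast
next
  case False
  then have "set w \<subseteq> {l}" using assms(3) by auto
  then have "lists_of {l} (length w) = {w}"
    by (auto simp: lists_of_def list_eq_iff_nth_eq subset_iff) (metis in_set_conv_nth)+
  then show ?thesis using lie_lsum[OF assms(1), of "{l}" "length w"] assms(4) by (simp add: lsum_def)
qed

lemma coll: assumes "f \<in> lie n" "n \<le> 9" "set L \<subseteq> {l, 9}" "length V \<noteq> 1" "length L \<le> 9"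
  shows "f (map (mp L) V) = 0"
proof (rule coll0[OF assms(1,2) _ ])
  show "set (map (mp L) V) \<subseteq> {l, 9}" using assms(3,5) by (auto simp: mp_def dest!: nth_mem)
  show "length (map (mp L) V) \<noteq> 1" using assms(4) by simp
qed

lemma a_shape:
  assumes u: "u \<in> tder 2" and z: "\<forall>w. d2 u 0 w = 0" and V: "length V \<noteq> 1"
  shows "u 0 V = 0"
proof -
  have n: "nine u" using tder_nine[OF u] by simp
  have l: "u 0 \<in> lie 2" using tder_lie[OF u] by simp
  have "d2 u 0 (map (mp [1,2,9,9]) V) = 0" using z by simp
  then have e: "- u 0 (map (mp [0,1,9,9]) V) + u 0 (map (mp [1,1,9,9]) V) - u 0 (map (mp [1,9,9,9]) V) = 0"
    by (simp add: d2_formula[OF n] mpv)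
  have "u 0 (map (mp [0,1,9,9]) V) = u 0 V" by (rule idmap[OF l]) (auto simp: less_Suc_eq nth_Cons')
  moreover have "u 0 (map (mp [1,1,9,9]) V) = 0" by (rule coll[OF l, of _ 1]) (use V in auto)
  moreover have "u 0 (map (mp [1,9,9,9]) V) = 0" by (rule coll[OF l, of _ 1]) (use V in auto)
  ultimately show ?thesis using e by simp
qed

lemma b_shape:
  assumes u: "u \<in> tder 2" and z: "\<forall>w. d2 u 2 w = 0" and V: "length V \<noteq> 1"
  shows "u 1 V = 0"
proof -
  have n: "nine u" using tder_nine[OF u] by simp
  have l: "u 1 \<in> lie 2" using tder_lie[OF u] by simp
  have "d2 u 2 (map (mp [0,1,9,9]) V) = 0" using z by simp
  then have e: "u 1 (map (mp [9,0,9,9]) V) - u 1 (map (mp [0,0,9,9]) V) + u 1 (map (mp [0,1,9,9]) V) = 0"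
    by (simp add: d2_formula[OF n] mpv)
  have "u 1 (map (mp [0,1,9,9]) V) = u 1 V" by (rule idmap[OF l]) (auto simp: less_Suc_eq nth_Cons')
  moreover have "u 1 (map (mp [9,0,9,9]) V) = 0" by (rule coll[OF l, of _ 0]) (use V in auto)
  moreover have "u 1 (map (mp [0,0,9,9]) V) = 0" by (rule coll[OF l, of _ 0]) (use V in auto)
  ultimately show ?thesis using e by simp
qed




definition Wd :: "nat \<Rightarrow> nat set \<Rightarrow> nat list" where
  "Wd n S = map (\<lambda>i. if i \<in> S then 1 else 0) [0..<n]"

lemma step:
  fixes H :: "'k::field_char_0 ser"
  assumes star: "\<forall>V. set V \<subseteq> {0,1,2} \<longrightarrow> 0 \<in> set V \<longrightarrow> 1 \<in> set V \<longrightarrow> 2 \<in> set V \<longrightarrow>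
      H (map (mp [0,1,1,9]) V) = H (map (mp [0,0,1,9]) V)"
    and TS: "T \<subseteq> S" "S \<subseteq> {..<n}" "t \<in> T" "s \<in> S - T" "r < n" "r \<notin> S"
  shows "H (Wd n S) = H (Wd n T)"
proof -
  define V where "V = map (\<lambda>i. if i \<in> T then 2 else if i \<in> S then 1 else (0::nat)) [0..<n]"
  have tn: "t < n" "s < n" using TS by auto
  have "set V \<subseteq> {0,1,2}" by (auto simp: V_def)
  moreover have "0 \<in> set V" using TS by (force simp: V_def)
  moreover have "1 \<in> set V" using TS tn by (force simp: V_def)
  moreover have "2 \<in> set V" using TS tn by (force simp: V_def)
  ultimately have e: "H (map (mp [0,1,1,9]) V) = H (map (mp [0,0,1,9]) V)" using star by blast
  have "map (mp [0,1,1,9]) V = Wd n S" using TS(1) by (auto simp: V_def Wd_def mp_def)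
  moreover have "map (mp [0,0,1,9]) V = Wd n T" using TS(1) by (auto simp: V_def Wd_def mp_def)
  ultimately show ?thesis using e by simp
qed

lemma Wd_of: "set U \<subseteq> {0,1} \<Longrightarrow> U = Wd (length U) {i. i < length U \<and> U!i = 1}"
proof -
  assume U: "set U \<subseteq> {0,1}"
  show ?thesis unfolding Wd_def
  proof (rule nth_equalityI)
    fix i assume i: "i < length U"
    have "U!i \<in> {0,1}" using U nth_mem[OF i] by blast
    then show "U ! i = map (\<lambda>i. if i \<in> {i. i < length U \<and> U ! i = 1} then 1 else 0) [0..<length U] ! i"
      using i by auto
  qed simp
qed

lemma mixed_const:
  fixes H :: "'k::field_char_0 ser"
  assumes star: "\<forall>V. set V \<subseteq> {0,1,2} \<longrightarrow> 0 \<in> set V \<longrightarrow> 1 \<in> set V \<longrightarrow> 2 \<in> set V \<longrightarrow>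
      H (map (mp [0,1,1,9]) V) = H (map (mp [0,0,1,9]) V)"
    and U: "set U \<subseteq> {0,1}" "0 \<in> set U" "1 \<in> set U" "length U \<ge> 3"
  shows "H U = H (Wd (length U) {0})"
proof -
  define n where "n = length U"
  define S where "S = {i. i < n \<and> U!i = 1}"
  have US: "U = Wd n S" using Wd_of[OF U(1)] by (simp add: S_def n_def)
  have Sn: "S \<subseteq> {..<n}" by (auto simp: S_def)
  obtain p where p: "p \<in> S" using U(3) unfolding S_def n_def in_set_conv_nth by blast
  obtain r where rr: "r < n" "r \<notin> S" using U(2) unfolding S_def n_def in_set_conv_nth by force
  have n3: "n \<ge> 3" using U(4) by (simp add: n_def)
  have pn: "p < n" using p Sn by auto
  have ln: "length (Wd n S) = n" by (simp add: Wd_def)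
  have single: "H (Wd n S) = H (Wd n {q})" if qS: "q \<in> S" for q
  proof (cases "S = {q}")
    case False
    then obtain s where "s \<in> S - {q}" using qS by blast
    then show ?thesis using step[OF star, of "{q}" S n q s r] qS Sn rr by auto
  qed simp
  show ?thesis
  proof (cases "0 \<in> S")
    case True then show ?thesis using single[OF True] US ln by simp
  next
    case False
    then have p0: "p \<noteq> 0" using p by (metis)
    obtain r' where r': "r' < n" "r' \<notin> {0, p}"
    proof -
      have "\<exists>r'\<in>{0,1,2::nat}. r' \<notin> {0,p}" by (cases "p = 1") auto
      then obtain r'' where "r'' \<in> {0,1,2::nat}" "r'' \<notin> {0,p}" by blast
      moreover then have "r'' < n" using n3 by auto
      ultimately show ?thesis using that by blast
    qed
    have "H (Wd n {p}) = H (Wd n {0,p})"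
      using step[OF star, of "{p}" "{0,p}" n p 0 r'] p0 pn r' by auto
    also have "\<dots> = H (Wd n {0})"
      using step[OF star, of "{0}" "{0,p}" n 0 p r'] p0 pn r' by auto
    finally show ?thesis using single[OF p] US ln by simp
  qed
qed


lemma const_rep: "set xs \<subseteq> {x} \<Longrightarrow> xs = replicate (length xs) x"
  by (rule replicate_eqI) auto

lemma H_zero:
  fixes H :: "'k::field_char_0 ser"
  assumes Hl: "H \<in> lie 2"
    and star: "\<forall>V. set V \<subseteq> {0,1,2} \<longrightarrow> 0 \<in> set V \<longrightarrow> 1 \<in> set V \<longrightarrow> 2 \<in> set V \<longrightarrow>
      H (map (mp [0,1,1,9]) V) = H (map (mp [0,0,1,9]) V)"
    and h0: "\<forall>U. set U \<subseteq> {0} \<longrightarrow> H U = 0" and h1: "\<forall>U. set U \<subseteq> {1} \<longrightarrow> H U = 0"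
    and U2: "length U \<noteq> 2"
  shows "H U = 0"
proof (cases "set U \<subseteq> {0,1}")
  case False
  then have "\<not> set U \<subseteq> {..<2}" by auto
  then show ?thesis using lie_supp[OF Hl] by blast
next
  case U01: True
  show ?thesis
  proof (cases "0 \<in> set U \<and> 1 \<in> set U")
    case False
    then have "set U \<subseteq> {0} \<or> set U \<subseteq> {1}" using U01 by auto
    then show ?thesis using h0 h1 by blast
  next
    case mixed: True
    define n where "n = length U"
    have n2: "n \<ge> 2" using mixed unfolding n_def
      by (metis length_0_conv less_2_cases_iff linorder_not_le list.set(1) list.set(2) length_Suc_conv empty_iff insertE zero_neq_one)
    then have n3: "n \<ge> 3" using U2 n_def by simp
    define e where "e = H (Wd n {0})"
    define A where "A = lists_of {0,1} n"
    define C where "C = {replicate n (0::nat), replicate n 1}"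
    have finA: "finite A" unfolding A_def lists_of_def by (rule finite_lists_length_eq) simp
    have CA: "C \<subseteq> A" by (auto simp: C_def A_def lists_of_def)
    have cardA: "card A = 2 ^ n" unfolding A_def lists_of_def by (simp add: card_lists_length_eq numeral_2_eq_2)
    have cardC: "card C = 2" using n2 by (simp add: C_def)
    have "0 = lsum {0,1} n H" using lie_lsum[OF Hl, of "{0,1}" n] n2 by simp
    also have "\<dots> = sum H (A - C) + sum H C" unfolding lsum_def A_def[symmetric]
      by (rule sum.subset_diff[OF CA finA])
    also have "sum H C = 0"
    proof -
      have "set (replicate n (0::nat)) \<subseteq> {0}" "set (replicate n (1::nat)) \<subseteq> {1}" by auto
      then have "H (replicate n 0) = 0" "H (replicate n 1) = 0" using h0 h1 by blast+
      then show ?thesis by (intro sum.neutral) (auto simp: C_def)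
    qed
    also have "sum H (A - C) = sum (\<lambda>_. e) (A - C)"
    proof (rule sum.cong[OF refl])
      fix x assume x: "x \<in> A - C"
      then have x01: "set x \<subseteq> {0,1}" and lx: "length x = n" by (auto simp: A_def lists_of_def)
      have "0 \<in> set x"
      proof (rule ccontr)
        assume "0 \<notin> set x"
        then have "set x \<subseteq> {1}" using x01 by auto
        then have "x = replicate n 1" using const_rep lx by metis
        then show False using x by (auto simp: C_def)
      qed
      moreover have "1 \<in> set x"
      proof (rule ccontr)
        assume "1 \<notin> set x"
        then have "set x \<subseteq> {0}" using x01 by auto
        then have "x = replicate n 0" using const_rep lx by metis
        then show False using x by (auto simp: C_def)
      qed
      ultimately show "H x = e" using mixed_const[OF star x01] lx n3 by (simp add: e_def)
    qed
    also have "\<dots> = of_nat (2 ^ n - 2) * e" proof -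
      have "card (A - C) = 2 ^ n - 2" using cardA cardC CA finA card_Diff_subset[OF finite_subset[OF CA finA] CA] by simp
      then show ?thesis by simp
    qed
    finally have z: "of_nat (2 ^ n - 2) * e = 0" by simp
    have "(2::nat) ^ n - 2 \<noteq> 0"
    proof -
      have "(2::nat) ^ n \<ge> 2 ^ 2" using n2 by (intro power_increasing) auto
      then show ?thesis by simp
    qed
    then have "e = 0" using z by (metis mult_eq_0_iff of_nat_eq_0_iff)
    then show ?thesis using mixed_const[OF star U01] mixed n3 by (simp add: e_def n_def)
  qed
qed

lemma lists2: "lists_of {0,1} 2 = {[0,0],[0,1],[1,0],[1,1::nat]}"
  by (auto simp: lists_of_def numeral_2_eq_2 length_Suc_conv)

lemma H_anti:
  fixes H :: "'k::field_char_0 ser"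
  assumes Hl: "H \<in> lie 2"
    and h0: "\<forall>U. set U \<subseteq> {0} \<longrightarrow> H U = 0" and h1: "\<forall>U. set U \<subseteq> {1} \<longrightarrow> H U = 0"
  shows "H [0,1] = - H [1,0]"
proof -
  have "lsum {0,1} 2 H = 0" using lie_lsum[OF Hl, of "{0,1}" 2] by simp
  then have "H [0,0] + (H [0,1] + (H [1,0] + H [1,1])) = 0" unfolding lsum_def lists2 by simp
  moreover have "H [0,0] = 0" "H [1,1] = 0" using h0 h1 by auto
  ultimately show ?thesis by (simp add: add_eq_0_iff2)
qed




lemma szero_lie: "szero \<in> lie n"
proof -
  have h: "hpart d szero = szero" for d by (simp add: hpart_def szero_def fun_eq_iff)
  show ?thesis unfolding lie_def by (auto simp only: h intro: lie_poly.zero)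
qed

lemma gen_lie: "i < n \<Longrightarrow> gen i \<in> lie n"
  unfolding lie_def
proof (intro CollectI allI)
  fix d assume i: "i < n"
  show "hpart d (gen i) \<in> lie_poly n"
  proof (cases "d = 1")
    case True
    then have "hpart d (gen i) = gen i" by (auto simp: hpart_def gen_def fun_eq_iff)
    then show ?thesis using i lie_poly.gen by metis
  next
    case False
    then have "hpart d (gen i) = szero" by (auto simp: hpart_def gen_def szero_def fun_eq_iff)
    then show ?thesis using lie_poly.zero by metis
  qed
qed

lemma lie_scale: "f \<in> lie n \<Longrightarrow> (\<lambda>w. c * f w) \<in> lie n"
  using lie_lin[of f n f c 0] by simp

definition RT :: "'k::field_char_0 \<Rightarrow> 'k \<Rightarrow> nat \<Rightarrow> 'k ser" where
  "RT a b = tadd (tsmul a r_der) (tsmul b t_der)"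

lemma RT_apply: "RT a b i w = (if i = 0 then (a + b) * gen 1 w else if i = 1 then b * gen 0 w else 0)"
  by (simp add: RT_def tadd_def tsmul_def r_der_def t_der_def sadd_def ssmul_def szero_def algebra_simps)

lemma RT_tder: "RT a b \<in> tder 2"
proof -
  have "RT a b 0 = (\<lambda>w. (a + b) * gen 1 w)" by (simp add: RT_apply fun_eq_iff)
  moreover have "RT a b 1 = (\<lambda>w. b * gen 0 w)" by (simp add: RT_apply fun_eq_iff)
  moreover have "RT a b i = szero" if "i \<ge> 2" for i using that by (simp add: RT_apply fun_eq_iff szero_def)
  moreover have "RT a b 0 \<in> lie 2" "RT a b 1 \<in> lie 2"
    using calculation(1,2) by (auto intro!: lie_scale gen_lie)
  moreover have "RT a b 0 [0] = 0" "RT a b 1 [1] = 0" by (auto simp: RT_apply gen_def)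
  ultimately show ?thesis unfolding tder_def
    by (auto simp: less_2_cases_iff)
qed

lemma gen_map: "gen k (map (mp L) w) = (if \<exists>j. w = [j] \<and> mp L j = k then 1 else 0)"
  by (cases w rule: remdups_adj.cases) (auto simp: gen_def)

lemma RT_cocycle: "d2 (RT a b) = tzero"
proof -
  have n: "nine (RT a b)" using tder_nine[OF RT_tder] by simp
  show ?thesis
  proof (intro ext)
    fix i w
    show "d2 (RT a b) i w = tzero i w"
    proof (cases "length w = 1")
      case False
      then have "\<forall>j. w \<noteq> [j]" by auto
      then show ?thesis by (simp add: tzero_def szero_def d2_formula[OF n] RT_apply gen_map)
    next
      case True
      then obtain j where w: "w = [j]" by (auto simp: length_Suc_conv)
      have "j = 0 \<or> j = 1 \<or> j = 2 \<or> j = 3 \<or> j \<ge> 4" by auto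
      then show ?thesis
        by (elim disjE) (simp_all add: w tzero_def szero_def d2_formula[OF n] RT_apply gen_def mp_def)
    qed
  qed
qed

lemma u_shape0:
  assumes u: "u \<in> tder 2" and z: "\<forall>w. d2 u 0 w = 0"
  shows "u 0 w = (if w = [1] then u 0 [1] else 0)"
proof (cases "length w = 1")
  case False then show ?thesis using a_shape[OF u z False] by auto
next
  case True
  then obtain j where w: "w = [j]" by (auto simp: length_Suc_conv)
  have "j = 1 \<or> j = 0 \<or> j \<ge> 2" by auto
  moreover have "u 0 [0] = 0" using u by (simp add: tder_def)
  moreover have "j \<ge> 2 \<Longrightarrow> u 0 [j] = 0" using lie_supp[OF tder_lie[OF u, of 0], of "[j]"] by auto
  ultimately show ?thesis using w by auto
qed

lemma u_shape1:
  assumes u: "u \<in> tder 2" and z: "\<forall>w. d2 u 2 w = 0"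
  shows "u 1 w = (if w = [0] then u 1 [0] else 0)"
proof (cases "length w = 1")
  case False then show ?thesis using b_shape[OF u z False] by auto
next
  case True
  then obtain j where w: "w = [j]" by (auto simp: length_Suc_conv)
  have "j = 1 \<or> j = 0 \<or> j \<ge> 2" by auto
  moreover have "u 1 [1] = 0" using u by (simp add: tder_def)
  moreover have "j \<ge> 2 \<Longrightarrow> u 1 [j] = 0" using lie_supp[OF tder_lie[OF u, of 1], of "[j]"] by auto
  ultimately show ?thesis using w by auto
qed

lemma part1: "{u \<in> (tder 2 :: (nat \<Rightarrow> 'k::field_char_0 ser) set). d2 u = tzero}
           = {tadd (tsmul a r_der) (tsmul b t_der) | a b. True}"
proof
  show "{tadd (tsmul a r_der) (tsmul b t_der) | a b. True} \<subseteq> {u \<in> (tder 2 :: (nat \<Rightarrow> 'k::field_char_0 ser) set). d2 u = tzero}"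
    using RT_tder RT_cocycle unfolding RT_def by blast
  show "{u \<in> (tder 2 :: (nat \<Rightarrow> 'k::field_char_0 ser) set). d2 u = tzero} \<subseteq> {tadd (tsmul a r_der) (tsmul b t_der) | a b. True}"
  proof
    fix u :: "nat \<Rightarrow> 'k ser" assume "u \<in> {u \<in> tder 2. d2 u = tzero}"
    then have u: "u \<in> tder 2" and z: "d2 u = tzero" by auto
    have z0: "\<forall>w. d2 u 0 w = 0" and z2: "\<forall>w. d2 u 2 w = 0" using z by (auto simp: tzero_def szero_def)
    have "u = RT (u 0 [1] - u 1 [0]) (u 1 [0])"
    proof (intro ext)
      fix i w
      show "u i w = RT (u 0 [1] - u 1 [0]) (u 1 [0]) i w"
      proof -
        have "i = 0 \<or> i = 1 \<or> i \<ge> 2" by auto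
        moreover have "i \<ge> 2 \<Longrightarrow> u i w = 0" using u by (simp add: tder_def szero_def)
        ultimately show ?thesis using u_shape0[OF u z0, of w] u_shape1[OF u z2, of w]
          by (auto simp: RT_apply gen_def)
      qed
    qed
    then show "u \<in> {tadd (tsmul a r_der) (tsmul b t_der) | a b. True}" unfolding RT_def by blast
  qed
qed

lemma part2: "tadd (tsmul a r_der) (tsmul b t_der) = (tzero :: nat \<Rightarrow> 'k::field_char_0 ser) \<Longrightarrow> a = 0 \<and> b = 0"
proof -
  assume "tadd (tsmul a r_der) (tsmul b t_der) = (tzero :: nat \<Rightarrow> 'k::field_char_0 ser)"
  then have h: "RT a b i w = 0" for i w unfolding RT_def by (simp add: tzero_def szero_def)
  from h[of 1 "[0]"] have "b = 0" by (simp add: RT_apply gen_def)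
  moreover from h[of 0 "[1]"] have "a + b = 0" by (simp add: RT_apply gen_def)
  ultimately show ?thesis by simp
qed




lemma smul_gen: "smul (gen i) (gen j) w = (if w = [i, j] then (1::'k::field_char_0) else 0)"
proof (cases "w = [i, j]")
  case True
  then show ?thesis by (simp add: smul_def gen_def numeral_2_eq_2)
next
  case False
  have z: "gen i (take k w) * gen j (drop k w) = (0::'k)" for k
  proof (rule ccontr)
    assume "gen i (take k w) * gen j (drop k w) \<noteq> (0::'k)"
    then have "take k w = [i]" "drop k w = [j]" by (auto simp: gen_def split: if_splits)
    then have "w = [i, j]" by (metis append_Cons append_Nil append_take_drop_id)
    then show False using False by simp
  qed
  have "smul (gen i) (gen j) w = (0::'k)" unfolding smul_def by (rule sum.neutral) (use z in simp)
  then show ?thesis using False by simp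
qed

definition cb :: "'k::field_char_0 ser" where "cb = sbr (gen 2) (gen 0)"

lemma cb_apply: "cb w = (if w = [2, 0] then 1 else if w = [0, 2] then -1 else (0::'k::field_char_0))"
  by (simp add: cb_def sbr_def smul_gen)

lemma cb_lie: "(cb :: 'k::field_char_0 ser) \<in> lie 3"
  unfolding lie_def
proof (intro CollectI allI)
  fix d
  show "hpart d (cb :: 'k ser) \<in> lie_poly 3"
  proof (cases "d = 2")
    case True
    then have "hpart d (cb :: 'k ser) = cb" by (auto simp: hpart_def cb_apply fun_eq_iff)
    moreover have "(cb :: 'k ser) \<in> lie_poly 3" unfolding cb_def by (intro lie_poly.br lie_poly.gen) auto
    ultimately show ?thesis by simp
  next
    case False
    then have "hpart d (cb :: 'k ser) = szero" by (auto simp: hpart_def cb_apply szero_def fun_eq_iff)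
    then show ?thesis using lie_poly.zero by metis
  qed
qed

lemma c_der_apply: "c_der i = (if i = 1 then cb else szero)"
  by (simp add: c_der_def cb_def)

lemma c_der_tder: "(c_der :: nat \<Rightarrow> 'k::field_char_0 ser) \<in> tder 3"
  unfolding tder_def using cb_lie szero_lie
  by (auto simp: c_der_apply cb_apply szero_def)

lemma c_der_cocycle: "d3 (c_der :: nat \<Rightarrow> 'k::field_char_0 ser) = tzero"
proof -
  have n: "nine (c_der :: nat \<Rightarrow> 'k ser)" using tder_nine[OF c_der_tder] by simp
  show ?thesis
  proof (intro ext)
    fix i w
    show "d3 (c_der :: nat \<Rightarrow> 'k ser) i w = tzero i w"
    proof (cases "length w = 2")
      case False
      then have "\<forall>p q. map (mp L) w \<noteq> [p, q]" for L by auto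
      then show ?thesis by (simp add: tzero_def szero_def d3_formula[OF n] c_der_apply cb_apply)
    next
      case True
      then obtain p q where w: "w = [p, q]" by (auto simp: numeral_2_eq_2 length_Suc_conv)
      have "p = 0 \<or> p = 1 \<or> p = 2 \<or> p = 3 \<or> p \<ge> 4" "q = 0 \<or> q = 1 \<or> q = 2 \<or> q = 3 \<or> q \<ge> 4" by auto
      then show ?thesis
        by (elim disjE) (simp_all add: w tzero_def szero_def d3_formula[OF n] c_der_apply cb_apply mp_def)
    qed
  qed
qed

lemma part5: "\<not> (\<exists>u \<in> (tder 2 :: (nat \<Rightarrow> 'k::field_char_0 ser) set). d2 u = c_der)"
proof
  assume "\<exists>u \<in> (tder 2 :: (nat \<Rightarrow> 'k::field_char_0 ser) set). d2 u = c_der"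
  then obtain u :: "nat \<Rightarrow> 'k ser" where u: "u \<in> tder 2" and e: "d2 u = c_der" by blast
  have z0: "\<forall>w. d2 u 0 w = 0" and z2: "\<forall>w. d2 u 2 w = 0" using e by (auto simp: c_der_apply szero_def)
  have n: "nine u" using tder_nine[OF u] by simp
  have "u k (map (mp L) [2,0]) = 0" if "k = 0 \<or> k = 1" for k L
    using that a_shape[OF u z0] b_shape[OF u z2] by auto
  then have "d2 u 1 [2,0] = 0" by (simp add: d2_formula[OF n])
  moreover have "c_der 1 [2,0] = (1::'k)" by (simp add: c_der_apply cb_apply)
  ultimately show False using e by simp
qed




lemma lie_add: "f \<in> lie n \<Longrightarrow> g \<in> lie n \<Longrightarrow> (\<lambda>w. f w + g w) \<in> lie n"
  using lie_lin[of f n g 1 1] by simp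
lemma lie_diff: "f \<in> lie n \<Longrightarrow> g \<in> lie n \<Longrightarrow> (\<lambda>w. f w - g w) \<in> lie n"
  using lie_lin[of f n g 1 "-1"] by simp

lemma part6:
  fixes v :: "nat \<Rightarrow> 'k::field_char_0 ser"
  assumes vt: "v \<in> tder 3" and vc: "d3 v = tzero"
  shows "\<exists>a. \<exists>u \<in> tder 2. v = tadd (tsmul a c_der) (d2 u)"
proof -
  have n: "nine v" using tder_nine[OF vt] by simp
  have E: "d3 v k W = 0" for k W using vc by (simp add: tzero_def szero_def)
  have la: "v 0 \<in> lie 3" and lb: "v 1 \<in> lie 3" and lc: "v 2 \<in> lie 3" using tder_lie[OF vt] by auto
  have a1: "v 0 [1] = 0"
  proof -
    have "v 0 [0] = 0" using vt by (simp add: tder_def)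
    then show ?thesis using E[of 0 "[1]"] by (simp add: d3_formula[OF n] mp_def)
  qed
  have c1: "v 2 [1] = 0"
  proof -
    have "v 2 [2] = 0" using vt by (simp add: tder_def)
    then show ?thesis using E[of 3 "[2]"] by (simp add: d3_formula[OF n] mp_def)
  qed
  define p where "p = (\<lambda>V. - v 0 (map (mp [1,2,9,9]) V))"
  define q where "q = (\<lambda>V. v 2 (map (mp [0,1,9,9]) V))"
  define u :: "nat \<Rightarrow> 'k ser" where "u = (\<lambda>i. if i = 0 then p else if i = 1 then q else szero)"
  have pl: "p \<in> lie 2"
  proof -
    have "rnm [1,2,9,9] (v 0) \<in> lie 2" by (rule lie_rnm[OF la]) (auto simp: less_Suc_eq nth_Cons')
    from lie_scale[OF this, of "-1"] show ?thesis by (simp add: p_def rnm_def)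
  qed
  have ql: "q \<in> lie 2"
  proof -
    have "rnm [0,1,9,9] (v 2) \<in> lie 2" by (rule lie_rnm[OF lc]) (auto simp: less_Suc_eq nth_Cons')
    then show ?thesis by (simp add: q_def rnm_def)
  qed
  have ut: "u \<in> tder 2"
    unfolding tder_def using pl ql a1 c1
    by (auto simp: u_def less_2_cases_iff p_def q_def mp_def)
  have nu: "nine u" using tder_nine[OF ut] by simp
  have d2u0: "d2 u 0 W = v 0 W" for W
  proof -
    have e: "d3 v 0 (map (mp [1,2,3,9]) W) = 0" by (rule E)
    have i: "v 0 (map (mp [0,1,2,9]) W) = v 0 W" by (rule idmap[OF la]) (auto simp: less_Suc_eq nth_Cons')
    show ?thesis unfolding d2_formula[OF nu] using e i by (simp add: d3_formula[OF n] u_def p_def mpv) algebra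
  qed
  have d2u2: "d2 u 2 W = v 2 W" for W
  proof -
    have e: "d3 v 3 (map (mp [0,1,2,9]) W) = 0" by (rule E)
    have i: "v 2 (map (mp [0,1,2,9]) W) = v 2 W" by (rule idmap[OF lc]) (auto simp: less_Suc_eq nth_Cons')
    show ?thesis unfolding d2_formula[OF nu] using e i by (simp add: d3_formula[OF n] u_def q_def mpv)
  qed
  define B where "B = (\<lambda>V. v 1 V - d2 u 1 V)"
  have Bf: "B = (\<lambda>V. v 1 V + rnm [9,1,2,9] (v 0) V - rnm [1,1,2,9] (v 0) V - rnm [0,1,1,9] (v 2) V + rnm [0,1,9,9] (v 2) V)"
    unfolding B_def d2_formula[OF nu] by (simp add: fun_eq_iff u_def p_def q_def rnm_def mpv)
  have Bl: "B \<in> lie 3" unfolding Bf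
    by (intro lie_add lie_diff lb lie_rnm[OF la] lie_rnm[OF lc]) (auto simp: less_Suc_eq nth_Cons')
  have P1: "B (map (mp [0,1,1,2]) W) - B (map (mp [0,1,2,2]) W) + B (map (mp [0,1,2,9]) W) = 0" for W
  proof -
    have e1: "d3 v 1 W = 0" by (rule E)
    have e2: "d3 v 0 (map (mp [9,1,2,3]) W) = 0" by (rule E)
    have e3: "d3 v 0 (map (mp [1,1,2,3]) W) = 0" by (rule E)
    note e = e1 e2 e3
    show ?thesis using e unfolding Bf rnm_def by (simp add: d3_formula[OF n] mpv) algebra
  qed
  have P2: "B (map (mp [9,0,1,2]) W) - B (map (mp [0,0,1,2]) W) + B (map (mp [0,1,1,2]) W) = 0" for W
  proof -
    have e1: "d3 v 2 W = 0" by (rule E)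
    have e2: "d3 v 3 (map (mp [0,1,2,2]) W) = 0" by (rule E)
    have e3: "d3 v 3 (map (mp [0,1,2,9]) W) = 0" by (rule E)
    note e = e1 e2 e3
    show ?thesis using e unfolding Bf rnm_def by (simp add: d3_formula[OF n] mpv) algebra
  qed
  have nB: "\<not> set V \<subseteq> {..<3} \<Longrightarrow> B V = 0" for V using lie_supp[OF Bl] by blast
  have B9: "B V = 0" if "(9::nat) \<in> set V" for V
  proof -
    have "\<not> set V \<subseteq> {..<3}" using that by auto
    then show ?thesis by (rule nB)
  qed
  have Q1: "B (map (mp [0,1,1,9]) V) = 0" for V
    using P1[of "map (mp [0,1,2,9]) V"] by (simp add: mpv)
  have Q2: "B (map (mp [1,1,2,9]) V) = 0" for V
    using P2[of "map (mp [1,2,3,9]) V"] by (simp add: mpv)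
  have Bid: "B (map (mp [0,1,2,9]) V) = B V" for V
    by (rule idmap[OF Bl]) (auto simp: less_Suc_eq nth_Cons')
  have Q3: "B V = B (map (mp [0,2,2,9]) V) - B (map (mp [0,2,9,9]) V)" for V
    using P1[of "map (mp [0,2,3,9]) V"] Bid[of V] by (simp add: mpv) algebra
  have Q4: "B V = B (map (mp [0,0,2,9]) V) - B (map (mp [9,0,2,9]) V)" for V
    using P2[of "map (mp [0,1,3,9]) V"] Bid[of V] by (simp add: mpv) algebra
  define H where "H = rnm [0,2,9,9] B"
  have Hl: "H \<in> lie 2" unfolding H_def by (rule lie_rnm[OF Bl]) (auto simp: less_Suc_eq nth_Cons')
  have HB: "H (map (mp L) V) = B (map (mp (map (mp [0,2,9,9]) L)) V)" if "length L \<le> 9" for L V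
    using that by (simp add: H_def rnm_def)
  have star: "\<forall>V. set V \<subseteq> {0,1,2} \<longrightarrow> 0 \<in> set V \<longrightarrow> 1 \<in> set V \<longrightarrow> 2 \<in> set V \<longrightarrow>
      H (map (mp [0,1,1,9]) V) = H (map (mp [0,0,1,9]) V)"
  proof (intro allI impI)
    fix V :: "nat list" assume V: "set V \<subseteq> {0,1,2}" "0 \<in> set V" "1 \<in> set V" "2 \<in> set V"
    have z1: "B (map (mp [0,2,9,9]) V) = 0"
      by (rule B9) (use V(4) in \<open>force simp: mpv\<close>)
    have z2: "B (map (mp [9,0,2,9]) V) = 0"
      by (rule B9) (use V(2) in \<open>force simp: mpv\<close>)
    show "H (map (mp [0,1,1,9]) V) = H (map (mp [0,0,1,9]) V)"
      using Q3[of V] Q4[of V] z1 z2 by (simp add: HB mpv)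
  qed
  have h0: "\<forall>U. set U \<subseteq> {0} \<longrightarrow> H U = 0"
  proof (intro allI impI)
    fix U :: "nat list" assume U: "set U \<subseteq> {0}"
    have m1: "map (mp [0,2,9,9]) U = U" by (rule map_idI) (use U in \<open>auto simp: mp_def\<close>)
    have m2: "map (mp [0,1,1,9]) U = U" by (rule map_idI) (use U in \<open>auto simp: mp_def\<close>)
    show "H U = 0" using Q1[of U] m1 m2 by (simp add: H_def rnm_def)
  qed
  have h1: "\<forall>U. set U \<subseteq> {1} \<longrightarrow> H U = 0"
  proof (intro allI impI)
    fix U :: "nat list" assume U: "set U \<subseteq> {1}"
    define U2 where "U2 = map (mp [0,2,9,9]) U"
    have s2: "set U2 \<subseteq> {2}" using U by (auto simp: U2_def mp_def)
    have m2: "map (mp [1,1,2,9]) U2 = U2" by (rule map_idI) (use s2 in \<open>auto simp: mp_def\<close>)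
    have "H U = B U2" by (simp add: H_def rnm_def U2_def)
    also have "\<dots> = B (map (mp [1,1,2,9]) U2)" by (simp only: m2)
    also have "\<dots> = 0" by (rule Q2)
    finally show "H U = 0" .
  qed
  have Hz: "length U \<noteq> 2 \<Longrightarrow> H U = 0" for U by (rule H_zero[OF Hl star h0 h1])
  have Ha: "H [0,1] = - H [1,0]" by (rule H_anti[OF Hl h0 h1])
  have H00: "H [0,0] = 0" "H [1,1] = 0" using h0 h1 by auto
  have H9: "H [x,9] = 0" "H [9,x] = 0" for x using lie_supp[OF Hl] by auto
  have Bx: "B V = H (map (mp [0,1,1,9]) V) - H (map (mp [0,1,9,9]) V)" for V
    using Q3[of V] by (simp add: HB mpv)
  define lam where "lam = B [2,0]"
  have core: "B V = lam * cb V" for V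
  proof (cases "length V = 2")
    case False
    then show ?thesis using Bx[of V] Hz by (auto simp: cb_apply)
  next
    case True
    then obtain x y where V: "V = [x, y]" by (auto simp: numeral_2_eq_2 length_Suc_conv)
    show ?thesis
    proof (cases "x < 3 \<and> y < 3")
      case False
      then have "B V = 0" using nB V by auto
      moreover have "cb V = 0" using False V by (auto simp: cb_apply)
      ultimately show ?thesis by (metis mult_zero_right)
    next
      case True
      then have "x = 0 \<or> x = 1 \<or> x = 2" "y = 0 \<or> y = 1 \<or> y = 2" by auto
      then show ?thesis
        by (elim disjE) (simp_all add: V lam_def Bx cb_apply mpv H00[simplified] H9 Ha[simplified])
    qed
  qed
  have "v = tadd (tsmul lam c_der) (d2 u)"
  proof (intro ext)
    fix i :: nat and W
    have "i = 0 \<or> i = 1 \<or> i = 2 \<or> i \<ge> 3" by auto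
    moreover have "i \<ge> 3 \<Longrightarrow> v i W = 0" using vt by (simp add: tder_def szero_def)
    moreover have "i \<ge> 3 \<Longrightarrow> d2 u i W = 0" by (simp add: d2_formula[OF nu])
    moreover have "v 1 W = lam * cb W + d2 u 1 W" using core[of W] unfolding B_def by (simp add: diff_eq_eq)
    ultimately show "v i W = tadd (tsmul lam c_der) (d2 u) i W"
      using d2u0[of W] d2u2[of W]
      by (auto simp: tadd_def tsmul_def sadd_def ssmul_def c_der_apply szero_def)
  qed
  then show ?thesis using ut by blast
qed


theorem theorem3p16:
  shows "{u \<in> (tder 2 :: (nat \<Rightarrow> 'k::field_char_0 ser) set). d2 u = tzero}
           = {tadd (tsmul a r_der) (tsmul b t_der) | a b. True}
    \<and> (\<forall>a b :: 'k. tadd (tsmul a r_der) (tsmul b t_der) = tzero \<longrightarrow> a = 0 \<and> b = 0)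
    \<and> (\<forall>u \<in> (tder 2 :: (nat \<Rightarrow> 'k ser) set). d3 (d2 u) = tzero)
    \<and> (c_der :: nat \<Rightarrow> 'k ser) \<in> tder 3 \<and> d3 (c_der :: nat \<Rightarrow> 'k ser) = tzero
    \<and> \<not> (\<exists>u \<in> (tder 2 :: (nat \<Rightarrow> 'k ser) set). d2 u = c_der)
    \<and> (\<forall>v \<in> (tder 3 :: (nat \<Rightarrow> 'k ser) set). d3 v = tzero \<longrightarrow>
         (\<exists>a. \<exists>u \<in> tder 2. v = tadd (tsmul a c_der) (d2 u)))"
proof (intro conjI)
  show "\<forall>a b :: 'k. tadd (tsmul a r_der) (tsmul b t_der) = tzero \<longrightarrow> a = 0 \<and> b = 0"
    using part2 by blast
  show "\<forall>u \<in> (tder 2 :: (nat \<Rightarrow> 'k ser) set). d3 (d2 u) = tzero" using d3d2 by blast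
  show "\<forall>v \<in> (tder 3 :: (nat \<Rightarrow> 'k ser) set). d3 v = tzero \<longrightarrow>
         (\<exists>a. \<exists>u \<in> tder 2. v = tadd (tsmul a c_der) (d2 u))" using part6 by blast
qed (rule part1 c_der_tder c_der_cocycle part5)+

end
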